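(* Let $n\ge1$ and $1\le p\le 2n$. Then the elements $y_0^l y_p$, $l=0,1,\dots,n-v_p$, form a $k$-basis of $\mathcal P^p(\mathcal O_n)$. (Here products are taken in the graded algebra $\mathcal P(\mathcal O_n)$.)
   Context: $k$ is a field of characteristic zero, $\mathcal O_n=k[x]/(x^{n+1})$, elements of $\mathcal O_n$ identified with multiplication operators, $\operatorname{ad}_x(\delta)=x\delta-\delta x$. The order filtration is $\mathcal D^p(\mathcal O_n)=\{\delta\in\operatorname{End}_k(\mathcal O_n):[f_0,[f_1,\dots,[f_p,\delta]\dots]]=0\ \forall f_i\in\mathcal O_n\}$ ($\mathcal D^{-1}=0$); $\mathcal P(\mathcal O_n)=\bigoplus_{p\ge0}\mathcal P^p(\mathcal O_n)$ with $\mathcal P^p(\mathcal O_n)=\mathcal D^p(\mathcal O_n)/\mathcal D^{p-1}(\mathcal O_n)$ is the associated graded commutative algebra. For $\delta\in\mathcal D^p(\mathcal O_n)$, $\operatorname{ad}_x^p(\delta)$ is multiplication by an element of $\mathcal O_n$ and $\operatorname{ad}_x^p:\mathcal D^p(\mathcal O_n)\to\mathcal O_n$ is $\mathcal O_n$-linear, so its image is an ideal $(x^{v_p})$ of $\mathcal O_n$; $v_p\in\{0,\dots,n\}$ denotes the corresponding exponent. For $1\le p\le 2n$, choose $\delta_p\in\mathcal D^p(\mathcal O_n)$ with $\frac{1}{p!}\operatorname{ad}_x^p(\delta_p)=x^{v_p}$, and let $y_p\in\mathcal P^p(\mathcal O_n)$ be its class (independent of the choice). Let $y_0\in\mathcal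 P^0(\mathcal O_n)$ be the class of (multiplication by) $x$. *)

theory Defs
  imports Main
begin

text \<open>Model of O_n = k[x]/(x^(n+1)) with basis 1, x, ..., x^n.
  An element of O_n is a coefficient function f :: nat => 'k vanishing above n.
  A k-linear endomorphism of O_n is its matrix M :: nat => nat => 'k
  (w.r.t. the monomial basis) vanishing outside {0..n} x {0..n}.\<close>

definition is_elem :: "nat \<Rightarrow> (nat \<Rightarrow> 'k::field) \<Rightarrow> bool" where
  "is_elem n f \<longleftrightarrow> (\<forall>i>n. f i = 0)"

definition is_endo :: "nat \<Rightarrow> (nat \<Rightarrow> nat \<Rightarrow> 'k::field) \<Rightarrow> bool" where
  "is_endo n M \<longleftrightarrow> (\<forall>i j. n < i \<or> n < j \<longrightarrow> M i j = 0)"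

definition mmul :: "nat \<Rightarrow> (nat \<Rightarrow> nat \<Rightarrow> 'k::field) \<Rightarrow> (nat \<Rightarrow> nat \<Rightarrow> 'k) \<Rightarrow> nat \<Rightarrow> nat \<Rightarrow> 'k" where
  "mmul n A B = (\<lambda>i j. \<Sum>t\<le>n. A i t * B t j)"

definition comm :: "nat \<Rightarrow> (nat \<Rightarrow> nat \<Rightarrow> 'k::field) \<Rightarrow> (nat \<Rightarrow> nat \<Rightarrow> 'k) \<Rightarrow> nat \<Rightarrow> nat \<Rightarrow> 'k" where
  "comm n A B = (\<lambda>i j. mmul n A B i j - mmul n B A i j)"

text \<open>Multiplication operator by f in O_n: (f g)_i = sum_{j<=i} f_(i-j) g_j (truncated at degree n).\<close>
definition mop :: "nat \<Rightarrow> (nat \<Rightarrow> 'k::field) \<Rightarrow> nat \<Rightarrow> nat \<Rightarrow> 'k" where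
  "mop n f = (\<lambda>i j. if j \<le> i \<and> i \<le> n then f (i - j) else 0)"

definition xpow :: "nat \<Rightarrow> nat \<Rightarrow> 'k::field" where
  "xpow v = (\<lambda>i. if i = v then 1 else 0)"

definition comm_list :: "nat \<Rightarrow> (nat \<Rightarrow> 'k::field) list \<Rightarrow> (nat \<Rightarrow> nat \<Rightarrow> 'k) \<Rightarrow> nat \<Rightarrow> nat \<Rightarrow> 'k" where
  "comm_list n fs d = foldr (\<lambda>f e. comm n (mop n f) e) fs d"

definition Dord :: "nat \<Rightarrow> nat \<Rightarrow> (nat \<Rightarrow> nat \<Rightarrow> 'k::field) set" where
  "Dord n p = {d. is_endo n d \<and>
     (\<forall>fs. length fs = Suc p \<and> (\<forall>f\<in>set fs. is_elem n f) \<longrightarrow> comm_list n fs d = (\<lambda>i j. 0))}"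

definition ad_x :: "nat \<Rightarrow> (nat \<Rightarrow> nat \<Rightarrow> 'k::field) \<Rightarrow> nat \<Rightarrow> nat \<Rightarrow> 'k" where
  "ad_x n d = comm n (mop n (xpow 1)) d"

text \<open>v_p: the exponent with ad_x^p(D^p) = (x^(v_p)), i.e. the least v such that
  multiplication by x^v lies in the image.\<close>
definition vp :: "nat \<Rightarrow> nat \<Rightarrow> 'k::field itself \<Rightarrow> nat" where
  "vp n p TYPE('k) = (LEAST v. mop n (xpow v) \<in> (ad_x n ^^ p) ` (Dord n p :: (nat \<Rightarrow> nat \<Rightarrow> 'k) set))"

end

theory Submission
  imports Defs "HOL-Computational_Algebra.Formal_Power_Series"
begin

lemma mmul_assoc: "mmul n (mmul n A B) C = mmul n A (mmul n B C)"
proof (intro ext)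
  fix i j
  have "(\<Sum>t\<le>n. (\<Sum>s\<le>n. A i s * B s t) * C t j) = (\<Sum>t\<le>n. \<Sum>s\<le>n. A i s * B s t * C t j)"
    by (simp add: sum_distrib_right)
  also have "... = (\<Sum>s\<le>n. \<Sum>t\<le>n. A i s * B s t * C t j)" by (rule sum.swap)
  also have "... = (\<Sum>s\<le>n. A i s * (\<Sum>t\<le>n. B s t * C t j))"
    by (simp add: sum_distrib_left mult.assoc)
  finally show "mmul n (mmul n A B) C i j = mmul n A (mmul n B C) i j" unfolding mmul_def .
qed

lemma mmul_diff_left: "mmul n (\<lambda>i j. A i j - B i j) C = (\<lambda>i j. mmul n A C i j - mmul n B C i j)"
  by (simp add: mmul_def algebra_simps sum_subtractf)

lemma mmul_diff_right: "mmul n C (\<lambda>i j. A i j - B i j) = (\<lambda>i j. mmul n C A i j - mmul n C B i j)"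
  by (simp add: mmul_def algebra_simps sum_subtractf)

lemma mmul_zero_right: "mmul n C (\<lambda>i j. 0) = (\<lambda>i j. 0)"
  by (simp add: mmul_def)

lemma mmul_scale_right: "mmul n C (\<lambda>i j. c * A i j) = (\<lambda>i j. c * mmul n C A i j)"
  by (simp add: mmul_def sum_distrib_left algebra_simps)

lemma mop_mult: "mmul n (mop n f) (mop n g) = mop n (fps_nth (Abs_fps g * Abs_fps f))"
proof (intro ext)
  fix i j
  show "mmul n (mop n f) (mop n g) i j = mop n (fps_nth (Abs_fps g * Abs_fps f)) i j"
  proof (cases "j \<le> i \<and> i \<le> n")
    case True
    have "mmul n (mop n f) (mop n g) i j = (\<Sum>t\<le>n. if t \<in> {j..i} then f (i - t) * g (t - j) else 0)"
      unfolding mmul_def mop_def using True by (intro sum.cong) auto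
    also have "... = (\<Sum>t\<in>{j..i}. f (i - t) * g (t - j))"
      using True by (subst sum.inter_restrict[symmetric]) (auto intro!: sum.cong)
    also have "... = (\<Sum>s\<in>{0..i-j}. f (i - (s + j)) * g (s + j - j))"
      using True sum.shift_bounds_cl_nat_ivl[of "\<lambda>t. f (i - t) * g (t - j)" 0 j "i - j"] by simp
    also have "... = (\<Sum>s=0..i-j. g s * f (i - j - s))"
      by (intro sum.cong refl) (simp add: mult.commute diff_diff_left add.commute)
    finally show ?thesis using True by (simp add: mop_def fps_mult_nth)
  next
    case False
    then show ?thesis by (auto simp: mmul_def mop_def intro!: sum.neutral)
  qed
qed

lemma mop_comm: "mmul n (mop n f) (mop n g) = mmul n (mop n g) (mop n f)"
  by (simp add: mop_mult mult.commute)

lemma ad_x_formula: "ad_x n A i j = (if 1 \<le> i \<and> i \<le> n then A (i - 1) j else 0) - (if j < n then A i (Suc j) else 0)"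
proof -
  have 1: "mmul n (mop n (xpow 1)) A i j = (if 1 \<le> i \<and> i \<le> n then A (i - 1) j else 0)"
  proof -
    have "mmul n (mop n (xpow 1)) A i j = (\<Sum>t\<le>n. if t = i - 1 then (if 1 \<le> i \<and> i \<le> n then A t j else 0) else 0)"
      unfolding mmul_def mop_def xpow_def by (intro sum.cong) auto
    also have "... = (if 1 \<le> i \<and> i \<le> n then A (i - 1) j else 0)"
      by (subst sum.delta) auto
    finally show ?thesis .
  qed
  have 2: "mmul n A (mop n (xpow 1)) i j = (if j < n then A i (Suc j) else 0)"
  proof -
    have "mmul n A (mop n (xpow 1)) i j = (\<Sum>t\<le>n. if t = Suc j then (if j < n then A i t else 0) else 0)"
      unfolding mmul_def mop_def xpow_def by (intro sum.cong) auto
    also have "... = (if j < n then A i (Suc j) else 0)"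
      by (subst sum.delta) auto
    finally show ?thesis .
  qed
  show ?thesis unfolding ad_x_def comm_def using 1 2 by simp
qed

lemma endo_comm_mop: assumes A: "is_endo n A" shows "is_endo n (comm n (mop n f) A)"
  unfolding is_endo_def
proof (intro allI impI)
  fix i j assume h: "n < i \<or> n < j"
  have 1: "mmul n (mop n f) A i j = 0"
    unfolding mmul_def
  proof (rule sum.neutral, rule ballI)
    fix t assume "t \<in> {..n}"
    then have "t \<le> n" by simp
    then show "mop n f i t * A t j = 0" using h A unfolding is_endo_def mop_def by auto
  qed
  have 2: "mmul n A (mop n f) i j = 0"
    unfolding mmul_def
  proof (rule sum.neutral, rule ballI)
    fix t assume "t \<in> {..n}"
    then have "t \<le> n" by simp
    then show "A i t * mop n f t j = 0" using h A unfolding is_endo_def mop_def by auto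
  qed
  show "comm n (mop n f) A i j = 0" unfolding comm_def using 1 2 by simp
qed

lemma endo_ad: "is_endo n A \<Longrightarrow> is_endo n (ad_x n A)"
  unfolding ad_x_def by (rule endo_comm_mop)

lemma endo_ad_pow: "is_endo n A \<Longrightarrow> is_endo n ((ad_x n ^^ m) A)"
  by (induction m) (auto intro: endo_ad)

lemma endo_lmul: assumes A: "is_endo n A" shows "is_endo n (mmul n (mop n f) A)"
  unfolding is_endo_def
proof (intro allI impI)
  fix i j assume h: "n < i \<or> n < j"
  show "mmul n (mop n f) A i j = 0"
    unfolding mmul_def
  proof (rule sum.neutral, rule ballI)
    fix t assume "t \<in> {..n}"
    then have "t \<le> n" by simp
    then show "mop n f i t * A t j = 0" using h A unfolding is_endo_def mop_def by auto
  qed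
qed

lemma comm_comm: "comm n (mop n f) (comm n (mop n g) A) = comm n (mop n g) (comm n (mop n f) A)"
proof -
  have fg: "mmul n (mop n f) (mmul n (mop n g) A) = mmul n (mop n g) (mmul n (mop n f) A)"
    by (metis mmul_assoc mop_comm)
  have gf: "mmul n A (mmul n (mop n g) (mop n f)) = mmul n A (mmul n (mop n f) (mop n g))"
    by (metis mop_comm)
  show ?thesis
    unfolding comm_def mmul_diff_left mmul_diff_right mmul_assoc fg gf
    by (simp add: algebra_simps)
qed

lemma ad_comm: "ad_x n (comm n (mop n f) A) = comm n (mop n f) (ad_x n A)"
  unfolding ad_x_def by (rule comm_comm)

lemma ad_pow_comm: "(ad_x n ^^ m) (comm n (mop n f) A) = comm n (mop n f) ((ad_x n ^^ m) A)"
  by (induction m) (simp_all add: ad_comm)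

lemma ad_lmul: "ad_x n (mmul n (mop n f) A) = mmul n (mop n f) (ad_x n A)"
proof -
  have fg: "mmul n (mop n (xpow 1)) (mmul n (mop n f) A) = mmul n (mop n f) (mmul n (mop n (xpow 1)) A)"
    by (metis mmul_assoc mop_comm)
  show ?thesis
    unfolding ad_x_def comm_def mmul_diff_right mmul_assoc fg ..
qed

lemma ad_pow_lmul: "(ad_x n ^^ m) (mmul n (mop n f) A) = mmul n (mop n f) ((ad_x n ^^ m) A)"
  by (induction m) (auto simp: ad_lmul)

lemma commutant:
  assumes e: "is_endo n e" and z: "ad_x n e = (\<lambda>i j. 0)"
  shows "e = mop n (\<lambda>i. e i 0)"
proof -
  have z': "\<And>i j. (if 1 \<le> i \<and> i \<le> n then e (i - 1) j else 0) = (if j < n then e i (Suc j) else 0)"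
    using fun_cong[OF fun_cong[OF z]] by (simp add: ad_x_formula)
  have "\<forall>i. e i j = mop n (\<lambda>i. e i 0) i j" for j
  proof (induction j)
    case 0
    show ?case using e unfolding mop_def is_endo_def by simp
  next
    case (Suc j)
    show ?case
    proof
      fix i
      show "e i (Suc j) = mop n (\<lambda>i. e i 0) i (Suc j)"
      proof (cases "j < n")
        case True
        then have "e i (Suc j) = (if 1 \<le> i \<and> i \<le> n then e (i - 1) j else 0)" using z'[of i j] by simp
        also have "... = mop n (\<lambda>i. e i 0) i (Suc j)"
        proof (cases "1 \<le> i \<and> i \<le> n")
          case True
          then have "(if 1 \<le> i \<and> i \<le> n then e (i - 1) j else 0) = e (i - 1) j" by simp
          also have "... = mop n (\<lambda>i. e i 0) (i - 1) j" using Suc.IH by blast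
          also have "... = (if j \<le> i - 1 then e (i - 1 - j) 0 else 0)"
            using True unfolding mop_def by (simp add: le_diff_conv)
          also have "... = mop n (\<lambda>i. e i 0) i (Suc j)" using True unfolding mop_def
            by (simp add: Suc_le_eq le_diff_conv2 diff_diff_left)
          finally show ?thesis .
        next
          case False
          then show ?thesis unfolding mop_def by auto
        qed
        finally show ?thesis .
      next
        case False
        have a: "e i (Suc j) = 0" using e False by (simp add: is_endo_def)
        have "\<not> (Suc j \<le> i \<and> i \<le> n)" using False by linarith
        then have b: "mop n (\<lambda>i. e i 0) i (Suc j) = 0" unfolding mop_def by (simp only: if_False)
        show ?thesis using a b by (simp only:)
      qed
    qed
  qed
  then show ?thesis by (intro ext) blast
qed


lemma comm_list_replicate: "comm_list n (replicate m f) d = (comm n (mop n f) ^^ m) d"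
  by (induction m) (simp_all add: comm_list_def)

lemma comm_list_vanish:
  assumes "is_endo n d"
  shows "(ad_x n ^^ (k + length fs)) d = (\<lambda>i j. 0) \<Longrightarrow> (ad_x n ^^ k) (comm_list n fs d) = (\<lambda>i j. 0)"
proof (induction fs arbitrary: k)
  case Nil
  then show ?case by (simp add: comm_list_def)
next
  case (Cons f fs)
  let ?e = "comm_list n fs d"
  have IH: "(ad_x n ^^ Suc k) ?e = (\<lambda>i j. 0)"
    using Cons.IH[of "Suc k"] Cons.prems by simp
  have en: "is_endo n ?e"
    unfolding comm_list_def by (induction fs) (simp_all add: endo_comm_mop assms)
  have en2: "is_endo n ((ad_x n ^^ k) ?e)" by (rule endo_ad_pow[OF en])
  have "ad_x n ((ad_x n ^^ k) ?e) = (\<lambda>i j. 0)" using IH by simp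
  then have eq: "(ad_x n ^^ k) ?e = mop n (\<lambda>i. (ad_x n ^^ k) ?e i 0)"
    by (rule commutant[OF en2])
  have "(ad_x n ^^ k) (comm_list n (f # fs) d) = comm n (mop n f) ((ad_x n ^^ k) ?e)"
    by (simp add: comm_list_def ad_pow_comm)
  also have "... = comm n (mop n f) (mop n (\<lambda>i. (ad_x n ^^ k) ?e i 0))"
    by (subst eq) (rule refl)
  also have "... = (\<lambda>i j. 0)"
    unfolding comm_def by (subst mop_comm) simp
  finally show ?case .
qed

lemma ad_x_eq: "ad_x n = comm n (mop n (xpow 1))"
  by (rule ext) (simp only: ad_x_def)

lemma Dord_iff: "1 \<le> n \<Longrightarrow> d \<in> Dord n q \<longleftrightarrow> is_endo n d \<and> (ad_x n ^^ Suc q) d = (\<lambda>i j. 0)"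
proof
  assume n: "1 \<le> n" and d: "d \<in> Dord n q"
  have "is_elem n (xpow 1 :: nat \<Rightarrow> 'a)" using n by (auto simp: is_elem_def xpow_def)
  then have "comm_list n (replicate (Suc q) (xpow 1)) d = (\<lambda>i j. 0)"
    using d unfolding Dord_def by auto
  then show "is_endo n d \<and> (ad_x n ^^ Suc q) d = (\<lambda>i j. 0)"
    using d unfolding comm_list_replicate ad_x_eq Dord_def by simp
next
  assume "is_endo n d \<and> (ad_x n ^^ Suc q) d = (\<lambda>i j. 0)"
  then show "d \<in> Dord n q"
    unfolding Dord_def using comm_list_vanish[of n d 0] by auto
qed

lemma ad_diff: "ad_x n (\<lambda>i j. A i j - B i j) = (\<lambda>i j. ad_x n A i j - ad_x n B i j)"
  by (intro ext) (simp add: ad_x_formula)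

lemma ad_pow_diff: "(ad_x n ^^ m) (\<lambda>i j. A i j - B i j) = (\<lambda>i j. (ad_x n ^^ m) A i j - (ad_x n ^^ m) B i j)"
  by (induction m) (simp_all add: ad_diff)

lemma ad_sum: "ad_x n (\<lambda>i j. \<Sum>l\<in>S. c l * A l i j) = (\<lambda>i j. \<Sum>l\<in>S. c l * ad_x n (A l) i j)"
proof (intro ext)
  fix i j
  show "ad_x n (\<lambda>i j. \<Sum>l\<in>S. c l * A l i j) i j = (\<Sum>l\<in>S. c l * ad_x n (A l) i j)"
    by (cases "1 \<le> i \<and> i \<le> n"; cases "j < n") (auto simp: ad_x_formula right_diff_distrib sum_subtractf)
qed

lemma ad_pow_sum: "(ad_x n ^^ m) (\<lambda>i j. \<Sum>l\<in>S. c l * A l i j) = (\<lambda>i j. \<Sum>l\<in>S. c l * (ad_x n ^^ m) (A l) i j)"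
proof (induction m)
  case (Suc m)
  show ?case using ad_sum[where n=n and S=S and c=c and A="\<lambda>l. (ad_x n ^^ m) (A l)"] by (simp add: Suc.IH)
qed simp

lemma ad_scale: "ad_x n (\<lambda>i j. c * A i j) = (\<lambda>i j. c * ad_x n A i j)"
  by (intro ext) (simp add: ad_x_formula right_diff_distrib)

lemma ad_pow_scale: "(ad_x n ^^ m) (\<lambda>i j. c * A i j) = (\<lambda>i j. c * (ad_x n ^^ m) A i j)"
  by (induction m) (simp_all add: ad_scale)

lemma ad_zero: "ad_x n (\<lambda>i j. 0) = (\<lambda>i j. 0)"
  by (intro ext) (simp add: ad_x_formula)

lemma ad_pow_zero: "(ad_x n ^^ m) (\<lambda>i j. 0) = (\<lambda>i j. 0)"
  by (induction m) (simp_all add: ad_zero)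

definition Emat :: "nat \<Rightarrow> nat \<Rightarrow> nat \<Rightarrow> 'k::field" where
  "Emat n = (\<lambda>i j. if i = 0 \<and> j = n then 1 else 0)"

lemma ad_pow_E:
  "(ad_x n ^^ m) (Emat n :: nat \<Rightarrow> nat \<Rightarrow> 'k) i j =
     (if i \<le> n \<and> j \<le> n \<and> i + n = m + j then (-1) ^ (n - j) * of_nat (m choose i) else (0::'k::field))"
proof (induction m arbitrary: i j)
  case 0
  show ?case by (auto simp: Emat_def)
next
  case (Suc m)
  have eq: "(ad_x n ^^ Suc m) (Emat n :: nat \<Rightarrow> nat \<Rightarrow> 'k) i j =
     (if 1 \<le> i \<and> i \<le> n then (ad_x n ^^ m) (Emat n :: nat \<Rightarrow> nat \<Rightarrow> 'k) (i - 1) j else 0)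
     - (if j < n then (ad_x n ^^ m) (Emat n :: nat \<Rightarrow> nat \<Rightarrow> 'k) i (Suc j) else 0)"
    by (simp add: ad_x_formula)
  show ?case
  proof (cases "i \<le> n \<and> j \<le> n \<and> i + n = Suc m + j")
    case True
    show ?thesis
    proof (cases "i = 0")
      case i0: True
      with True have jn: "j < n" by simp
      have s: "(-1::'k) ^ (n - j) = - ((-1) ^ (n - Suc j))"
        using jn by (simp add: Suc_diff_Suc[symmetric])
      show ?thesis unfolding eq Suc.IH using True i0 jn s by simp
    next
      case False
      then obtain i' where i': "i = Suc i'" by (cases i) auto
      show ?thesis
      proof (cases "j = n")
        case jn: True
        then have "i' = m" using True i' by simp
        then show ?thesis unfolding eq Suc.IH using True i' jn by simp
      next
        case jn: False
        then have jn': "j < n" using True by simp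
        have s: "(-1::'k) ^ (n - j) = - ((-1) ^ (n - Suc j))"
          using jn' by (simp add: Suc_diff_Suc[symmetric])
        have e1: "(ad_x n ^^ Suc m) (Emat n :: nat \<Rightarrow> nat \<Rightarrow> 'k) i j = (ad_x n ^^ m) (Emat n :: nat \<Rightarrow> nat \<Rightarrow> 'k) i' j - (ad_x n ^^ m) (Emat n :: nat \<Rightarrow> nat \<Rightarrow> 'k) i (Suc j)"
          using eq True i' jn' by simp
        have e2: "(ad_x n ^^ m) (Emat n :: nat \<Rightarrow> nat \<Rightarrow> 'k) i' j = (-1) ^ (n - j) * of_nat (m choose i')"
          using Suc.IH[of i' j] True i' by simp
        have e3: "(ad_x n ^^ m) (Emat n :: nat \<Rightarrow> nat \<Rightarrow> 'k) i (Suc j) = (-1) ^ (n - Suc j) * of_nat (m choose Suc i')"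
          using Suc.IH[of i "Suc j"] True i' jn' by simp
        have "(ad_x n ^^ Suc m) (Emat n :: nat \<Rightarrow> nat \<Rightarrow> 'k) i j = (-1) ^ (n - j) * of_nat (m choose i') - (-1) ^ (n - Suc j) * of_nat (m choose Suc i')"
          using e1 e2 e3 by simp
        also have "... = (-1) ^ (n - j) * of_nat (Suc m choose i)"
          unfolding s i' by (simp add: algebra_simps)
        finally show ?thesis using True by simp
      qed
    qed
  next
    case False
    have a: "(if 1 \<le> i \<and> i \<le> n then (ad_x n ^^ m) (Emat n :: nat \<Rightarrow> nat \<Rightarrow> 'k) (i - 1) j else 0) = 0"
      unfolding Suc.IH using False by auto
    have b: "(if j < n then (ad_x n ^^ m) (Emat n :: nat \<Rightarrow> nat \<Rightarrow> 'k) i (Suc j) else 0) = 0"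
      unfolding Suc.IH using False by auto
    show ?thesis unfolding eq a b if_not_P[OF False] by simp
  qed
qed

lemma endo_E: "is_endo n (Emat n)"
  by (simp add: is_endo_def Emat_def)

lemma vp_le:
  assumes n: "1 \<le> n" and p: "p \<le> 2 * n"
  shows "vp n p TYPE('k::field_char_0) \<le> n"
proof -
  define c :: 'k where "c = (-1) ^ n * of_nat (2 * n choose n)"
  have c0: "c \<noteq> 0" unfolding c_def by simp
  define d0 :: "nat \<Rightarrow> nat \<Rightarrow> 'k" where "d0 = (\<lambda>i j. inverse c * (ad_x n ^^ (2 * n - p)) (Emat n) i j)"
  have pw: "(ad_x n ^^ k) d0 = (\<lambda>i j. inverse c * (ad_x n ^^ (k + (2 * n - p))) (Emat n) i j)" for k
    unfolding d0_def ad_pow_scale funpow_add by simp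
  have sp: "Suc p + (2 * n - p) = Suc (2 * n)" using p by simp
  have z0: "(ad_x n ^^ Suc p) d0 = (\<lambda>i j. 0)"
    unfolding pw sp
  proof (intro ext)
    fix i j
    have "\<not> (i \<le> n \<and> j \<le> n \<and> i + n = Suc (2 * n) + j)" by arith
    then show "inverse c * (ad_x n ^^ Suc (2 * n)) (Emat n) i j = 0"
      by (simp only: ad_pow_E if_not_P) simp
  qed
  have en: "is_endo n ((ad_x n ^^ (2 * n - p)) (Emat n) :: nat \<Rightarrow> nat \<Rightarrow> 'k)"
    by (rule endo_ad_pow[OF endo_E])
  have e0: "is_endo n d0"
    unfolding d0_def using en by (simp add: is_endo_def)
  have d0D: "d0 \<in> Dord n p" by (rule Dord_iff[OF n, THEN iffD2, OF conjI[OF e0 z0]])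
  have "(ad_x n ^^ p) d0 = mop n (xpow n)"
  proof (intro ext)
    fix i j
    have "(ad_x n ^^ p) d0 i j = inverse c * (ad_x n ^^ (2 * n)) (Emat n) i j"
      unfolding pw using p by (simp del: funpow.simps)
    also have "... = (if i = n \<and> j = 0 then 1 else 0)"
    proof (cases "i = n \<and> j = 0")
      case True
      then have "inverse c * (ad_x n ^^ (2 * n)) (Emat n) i j = inverse c * c"
        by (simp only: ad_pow_E) (simp add: c_def)
      then show ?thesis using c0 True by simp
    next
      case False
      then have "\<not> (i \<le> n \<and> j \<le> n \<and> i + n = 2 * n + j)" by arith
      then show ?thesis using False by (simp only: ad_pow_E if_not_P) simp
    qed
    also have "... = mop n (xpow n) i j"
      by (auto simp: mop_def xpow_def)
    finally show "(ad_x n ^^ p) d0 i j = mop n (xpow n) i j" .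
  qed
  then have "mop n (xpow n) \<in> (ad_x n ^^ p) ` (Dord n p :: (nat \<Rightarrow> nat \<Rightarrow> 'k) set)"
    using d0D by (metis image_eqI)
  then show ?thesis unfolding vp_def by (rule Least_le)
qed

lemma Abs_xpow: "Abs_fps (xpow k) = (fps_X ^ k :: 'k::field fps)"
  by (rule fps_ext) (simp add: xpow_def)

lemma nth_Xpow: "fps_nth (fps_X ^ k :: 'k::field fps) = xpow k"
  by (rule ext) (simp add: xpow_def)

lemma xmul: "mmul n (mop n (xpow l)) (mop n (xpow v)) = (mop n (xpow (l + v)) :: nat \<Rightarrow> nat \<Rightarrow> 'k::field)"
proof -
  have "(fps_X ^ v * fps_X ^ l :: 'k fps) = fps_X ^ (l + v)" by (simp add: power_add mult.commute)
  then show ?thesis unfolding mop_mult Abs_xpow by (simp add: nth_Xpow)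
qed

lemma mop_xpow_entry: "l0 + v \<le> n \<Longrightarrow> mop n (xpow (l + v)) (l0 + v) 0 = (if l = l0 then 1 else 0)"
  by (auto simp: mop_def xpow_def)

lemma mop_expand:
  assumes Z: "\<forall>w<v. h w = 0"
  shows "mop n h i j = (\<Sum>l\<le>n - v. h (l + v) * mop n (xpow (l + v)) i j)"
proof (cases "j \<le> i \<and> i \<le> n")
  case True
  have "(\<Sum>l\<le>n - v. h (l + v) * mop n (xpow (l + v)) i j) = (\<Sum>l\<le>n - v. if l = i - j - v then (if v \<le> i - j then h (i - j) else 0) else 0)"
    using True by (intro sum.cong) (auto simp: mop_def xpow_def)
  also have "... = (if v \<le> i - j then h (i - j) else 0)"
    using True by (subst sum.delta) auto
  also have "... = mop n h i j"
    using True Z by (auto simp: mop_def)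
  finally show ?thesis by simp
next
  case False
  then show ?thesis unfolding mop_def if_not_P[OF False] by simp
qed

theorem lemma4:
  fixes n p :: nat and dp :: "nat \<Rightarrow> nat \<Rightarrow> 'k::field_char_0"
  assumes "1 \<le> n" and "1 \<le> p" and "p \<le> 2 * n"
    and "dp \<in> Dord n p"
    and "(\<lambda>i j. (ad_x n ^^ p) dp i j / of_nat (fact p)) = mop n (xpow (vp n p TYPE('k)))"
  shows "(\<forall>l \<le> n - vp n p TYPE('k). mmul n (mop n (xpow l)) dp \<in> Dord n p)
    \<and> (\<forall>c :: nat \<Rightarrow> 'k.
          (\<lambda>i j. \<Sum>l\<le>n - vp n p TYPE('k). c l * mmul n (mop n (xpow l)) dp i j) \<in> Dord n (p - 1)
          \<longrightarrow> (\<forall>l \<le> n - vp n p TYPE('k). c l = 0))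
    \<and> (\<forall>d \<in> Dord n p. \<exists>c :: nat \<Rightarrow> 'k.
          (\<lambda>i j. d i j - (\<Sum>l\<le>n - vp n p TYPE('k). c l * mmul n (mop n (xpow l)) dp i j)) \<in> Dord n (p - 1))"
proof -
  note n = assms(1)
  define v where "v = vp n p TYPE('k)"
  have hv: "v \<le> n" unfolding v_def using vp_le[OF n assms(3)] .
  have fp: "(of_nat (fact p) :: 'k) \<noteq> 0" by simp
  have dpD: "is_endo n dp" "(ad_x n ^^ Suc p) dp = (\<lambda>i j. 0)"
    using Dord_iff[OF n, THEN iffD1, OF assms(4)] by auto
  have adp: "(ad_x n ^^ p) dp = (\<lambda>i j. of_nat (fact p) * mop n (xpow v) i j)"
  proof (intro ext)
    fix i j
    have "(ad_x n ^^ p) dp i j / of_nat (fact p) = mop n (xpow v) i j"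
      using fun_cong[OF fun_cong[OF assms(5)], of i j] unfolding v_def by simp
    then show "(ad_x n ^^ p) dp i j = of_nat (fact p) * mop n (xpow v) i j"
      using fp by (simp add: field_simps)
  qed
  have sp: "Suc (p - 1) = p" using assms(2) by simp
  have lmulD: "mmul n (mop n f) A \<in> Dord n q" if "A \<in> Dord n q" for f A q
  proof -
    have eA: "is_endo n A" and zA: "(ad_x n ^^ Suc q) A = (\<lambda>i j. 0)"
      using Dord_iff[OF n, THEN iffD1, OF that] by auto
    have e: "is_endo n (mmul n (mop n f) A)" by (rule endo_lmul[OF eA])
    have z: "(ad_x n ^^ Suc q) (mmul n (mop n f) A) = (\<lambda>i j. 0)"
      by (simp only: ad_pow_lmul zA mmul_zero_right)
    show ?thesis by (rule Dord_iff[OF n, THEN iffD2, OF conjI[OF e z]])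
  qed
  have adpl: "(ad_x n ^^ p) (mmul n (mop n (xpow l)) dp) = (\<lambda>i j. of_nat (fact p) * mop n (xpow (l + v)) i j)" for l
    unfolding ad_pow_lmul adp mmul_scale_right xmul ..
  have P1: "\<forall>l \<le> n - v. mmul n (mop n (xpow l)) dp \<in> Dord n p"
    using lmulD[OF assms(4)] by blast
  have P2: "\<forall>c :: nat \<Rightarrow> 'k.
          (\<lambda>i j. \<Sum>l\<le>n - v. c l * mmul n (mop n (xpow l)) dp i j) \<in> Dord n (p - 1)
          \<longrightarrow> (\<forall>l \<le> n - v. c l = 0)"
  proof (intro allI impI)
    fix c :: "nat \<Rightarrow> 'k" and l0
    assume S: "(\<lambda>i j. \<Sum>l\<le>n - v. c l * mmul n (mop n (xpow l)) dp i j) \<in> Dord n (p - 1)"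
      and l0: "l0 \<le> n - v"
    have "(ad_x n ^^ Suc (p - 1)) (\<lambda>i j. \<Sum>l\<le>n - v. c l * mmul n (mop n (xpow l)) dp i j) = (\<lambda>i j. 0)"
      using Dord_iff[OF n, THEN iffD1, OF S] by (rule conjunct2)
    then have "(ad_x n ^^ p) (\<lambda>i j. \<Sum>l\<le>n - v. c l * mmul n (mop n (xpow l)) dp i j) = (\<lambda>i j. 0)"
      unfolding sp .
    then have "(\<lambda>i j. \<Sum>l\<le>n - v. c l * (of_nat (fact p) * mop n (xpow (l + v)) i j)) = (\<lambda>i j. 0)"
      unfolding ad_pow_sum adpl .
    then have "(\<Sum>l\<le>n - v. c l * (of_nat (fact p) * mop n (xpow (l + v)) (l0 + v) 0)) = 0"
      by (rule fun_cong[OF fun_cong, of _ _ "l0 + v" 0, simplified])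
    moreover have "(\<Sum>l\<le>n - v. c l * (of_nat (fact p) * mop n (xpow (l + v)) (l0 + v) 0)) = c l0 * of_nat (fact p)"
    proof -
      have "(\<Sum>l\<le>n - v. c l * (of_nat (fact p) * mop n (xpow (l + v)) (l0 + v) 0)) =
          (\<Sum>l\<le>n - v. if l = l0 then c l * of_nat (fact p) else 0)"
        using l0 hv by (intro sum.cong refl) (simp add: mop_xpow_entry)
      also have "... = c l0 * of_nat (fact p)" using l0 by (subst sum.delta) auto
      finally show ?thesis .
    qed
    ultimately show "c l0 = 0" using fp by simp
  qed
  have P3: "\<forall>d \<in> Dord n p. \<exists>c :: nat \<Rightarrow> 'k.
          (\<lambda>i j. d i j - (\<Sum>l\<le>n - v. c l * mmul n (mop n (xpow l)) dp i j)) \<in> Dord n (p - 1)"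
  proof
    fix d :: "nat \<Rightarrow> nat \<Rightarrow> 'k" assume dD: "d \<in> Dord n p"
    have dE: "is_endo n d" and dZ: "(ad_x n ^^ Suc p) d = (\<lambda>i j. 0)" using Dord_iff[OF n, THEN iffD1, OF dD] by auto
    define e where "e = (ad_x n ^^ p) d"
    define h where "h = (\<lambda>i. e i 0)"
    have eE: "is_endo n e" unfolding e_def by (rule endo_ad_pow[OF dE])
    have "ad_x n e = (\<lambda>i j. 0)" using dZ unfolding e_def by simp
    then have eh: "e = mop n h" unfolding h_def by (rule commutant[OF eE])
    have Z: "\<forall>w<v. h w = 0"
    proof (rule ccontr)
      assume "\<not> (\<forall>w<v. h w = 0)"
      then obtain w' where w': "w' < v" "h w' \<noteq> 0" by auto
      define w where "w = (LEAST w. h w \<noteq> 0)"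
      have hw: "h w \<noteq> 0" unfolding w_def using w'(2) by (rule LeastI)
      have below: "\<forall>i<w. h i = 0" unfolding w_def using not_less_Least by blast
      have "w \<le> w'" unfolding w_def using w'(2) by (rule Least_le)
      with w' have wv: "w < v" by simp
      define u :: "'k fps" where "u = Abs_fps (\<lambda>i. h (i + w))"
      have u0: "fps_nth u 0 \<noteq> 0" unfolding u_def using hw by simp
      have H: "Abs_fps h = fps_X ^ w * u"
        by (rule fps_ext) (simp add: fps_X_power_mult_nth u_def below)
      define g where "g = inverse u"
      have "mmul n (mop n (fps_nth g)) d \<in> Dord n p" by (rule lmulD[OF dD])
      moreover have "(ad_x n ^^ p) (mmul n (mop n (fps_nth g)) d) = mop n (xpow w)"
      proof -
        have "(ad_x n ^^ p) (mmul n (mop n (fps_nth g)) d) = mmul n (mop n (fps_nth g)) (mop n h)"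
          unfolding ad_pow_lmul e_def[symmetric] eh ..
        also have "... = mop n (fps_nth (Abs_fps h * g))"
          unfolding mop_mult fps_nth_inverse ..
        also have "Abs_fps h * g = fps_X ^ w"
          unfolding H g_def using inverse_mult_eq_1'[OF u0] by (simp add: mult.assoc)
        finally show ?thesis by (simp add: nth_Xpow)
      qed
      ultimately have "mop n (xpow w) \<in> (ad_x n ^^ p) ` (Dord n p :: (nat \<Rightarrow> nat \<Rightarrow> 'k) set)"
        by (metis image_eqI)
      then have "v \<le> w" unfolding v_def vp_def by (rule Least_le)
      with wv show False by simp
    qed
    define c where "c = (\<lambda>l. h (l + v) / of_nat (fact p))"
    let ?T = "\<lambda>i j. d i j - (\<Sum>l\<le>n - v. c l * mmul n (mop n (xpow l)) dp i j)"
    have endo_each: "is_endo n (mmul n (mop n (xpow l)) dp)" for l by (rule endo_lmul[OF dpD(1)])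
    have TE: "is_endo n ?T"
      using dE endo_each unfolding is_endo_def by simp
    have "(ad_x n ^^ p) ?T = (\<lambda>i j. e i j - (\<Sum>l\<le>n - v. c l * (of_nat (fact p) * mop n (xpow (l + v)) i j)))"
      unfolding ad_pow_diff ad_pow_sum adpl e_def ..
    also have "... = (\<lambda>i j. 0)"
    proof (intro ext)
      fix i j
      have "(\<Sum>l\<le>n - v. c l * (of_nat (fact p) * mop n (xpow (l + v)) i j)) = (\<Sum>l\<le>n - v. h (l + v) * mop n (xpow (l + v)) i j)"
        unfolding c_def using fp by (intro sum.cong refl) simp
      also have "... = e i j" unfolding eh using mop_expand[OF Z] by simp
      finally show "e i j - (\<Sum>l\<le>n - v. c l * (of_nat (fact p) * mop n (xpow (l + v)) i j)) = 0" by simp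
    qed
    finally have "(ad_x n ^^ Suc (p - 1)) ?T = (\<lambda>i j. 0)" unfolding sp .
    then have "?T \<in> Dord n (p - 1)" by (rule Dord_iff[OF n, THEN iffD2, OF conjI[OF TE]])
    then show "\<exists>c :: nat \<Rightarrow> 'k. (\<lambda>i j. d i j - (\<Sum>l\<le>n - v. c l * mmul n (mop n (xpow l)) dp i j)) \<in> Dord n (p - 1)"
      by blast
  qed
  show ?thesis using P1 P2 P3 unfolding v_def by blast
qed

end
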